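(* (Soundness of rule Init.) Let $A$ be a predicate over $X_{\mathrm{all}}\cup E\cup U$, $\mathbf{x}\in X_{\mathrm{all}}$ a program variable, and $\mathbf{e}\notin E\cup U$ an entangled ghost of the same type as $\mathbf{x}$. Then $\{A\}\ \mathbf{init}\ \mathbf{x}\ \{A\{\mathbf{e}/\mathbf{x}\},\ \mathbf{x}=_q|0\rangle\}$, where $A\{\mathbf{e}/\mathbf{x}\}$ is the predicate obtained from $A$ by renaming $\mathbf{x}$ to $\mathbf{e}$ (the image of $A$ under the canonical isomorphism $|i\rangle_{\mathbf{x}}\mapsto|i\rangle_{\mathbf{e}}$ tensored with identity), and the comma denotes intersection.
   Context: Variables have types (sets containing a distinguished $0$) and are program variables, entangled ghosts, or unentangled ghosts. $\ell^2[V]$ is the Hilbert space with orthonormal basis indexed by assignments on $V$; mixed memories are positive trace-class operators; $\mathrm{tr}_W$ is partial trace; $\mathrm{supp}\,\rho$ is the closure of the range; $(V,W)$-separable means a convergent sum of $\rho_i\otimes\rho_i'$ of mixed memories over $V$ and $W$. A predicate over $V$ is a closed subspace of $\ell^2[V]$; $(W=_q\psi):=\mathrm{span}\{\psi\}\otimes\ell^2[V\setminus W]$; predicates over different variable sets are identified if they agree after tensoring with full spaces of missing variables. $\rho$ over program variables $X$ satisfies a predicate $A$ over $X\cup E\cup U$ iff there is an $(X\cup E,U)$-separable $\rho^\circ$ over $X\cup E\cup U$ with $\mathrm{supp}\,\rho^\circ\subseteq A$ and $\mathrm{tr}_{E\cup U}\rho^\circ=\rho$. $X_{\mathrm{all}}$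 is a fixed set of program variables; $[\![\mathbf{init}\ \mathbf{x}]\!](\rho)=\mathrm{tr}_{\mathbf{x}}\rho\otimes|0\rangle\langle0|_{\mathbf{x}}$ on mixed memories over $X_{\mathrm{all}}$. $\{A\}c\{B\}$ means that for all mixed memories $\rho$ over $X_{\mathrm{all}}$ with $\rho\models A$, $[\![c]\!](\rho)\models B$. *)

theory Defs
  imports "HOL-Analysis.Analysis"
begin

text \<open>T v is the type (a set) of variable v,
  z v \<in> T v its distinguished 0.  An assignment on V is a function that maps every
  v \<in> V into T v and is undefined outside V.  Operators (mixed memories) are
  represented by their matrix kernels w.r.t. the computational basis.\<close>

datatype vkind = Prog | EGhost | UGhost

definition asg :: "('v \<Rightarrow> 'a set) \<Rightarrow> 'v set \<Rightarrow> ('v \<Rightarrow> 'a) set" where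
  "asg T V = {m. (\<forall>v\<in>V. m v \<in> T v) \<and> (\<forall>v. v \<notin> V \<longrightarrow> m v = undefined)}"

definition restr :: "'v set \<Rightarrow> ('v \<Rightarrow> 'a) \<Rightarrow> ('v \<Rightarrow> 'a)" where
  "restr V m = (\<lambda>v. if v \<in> V then m v else undefined)"

definition merge :: "'v set \<Rightarrow> ('v \<Rightarrow> 'a) \<Rightarrow> ('v \<Rightarrow> 'a) \<Rightarrow> ('v \<Rightarrow> 'a)" where
  "merge W u s = (\<lambda>v. if v \<in> W then u v else s v)"

text \<open>The Hilbert space l2[V] (as functions on assignments, zero outside asg V).\<close>
definition l2 :: "('v \<Rightarrow> 'a set) \<Rightarrow> 'v set \<Rightarrow> (('v \<Rightarrow> 'a) \<Rightarrow> complex) set" where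
  "l2 T V = {\<psi>. (\<forall>m. m \<notin> asg T V \<longrightarrow> \<psi> m = 0) \<and>
                 (\<lambda>m. (cmod (\<psi> m))^2) summable_on asg T V}"

definition l2norm :: "('v \<Rightarrow> 'a set) \<Rightarrow> 'v set \<Rightarrow> (('v \<Rightarrow> 'a) \<Rightarrow> complex) \<Rightarrow> real" where
  "l2norm T V \<psi> = sqrt (infsum (\<lambda>m. (cmod (\<psi> m))^2) (asg T V))"

definition l2closure :: "('v \<Rightarrow> 'a set) \<Rightarrow> 'v set \<Rightarrow> (('v \<Rightarrow> 'a) \<Rightarrow> complex) set
     \<Rightarrow> (('v \<Rightarrow> 'a) \<Rightarrow> complex) set" where
  "l2closure T V S = {\<psi> \<in> l2 T V. \<exists>f. (\<forall>n. f n \<in> S) \<and>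
      (\<lambda>n. l2norm T V (\<lambda>m. f n m - \<psi> m)) \<longlonglongrightarrow> 0}"

definition is_predicate :: "('v \<Rightarrow> 'a set) \<Rightarrow> 'v set \<Rightarrow> (('v \<Rightarrow> 'a) \<Rightarrow> complex) set \<Rightarrow> bool" where
  "is_predicate T V A \<longleftrightarrow> A \<subseteq> l2 T V \<and> (\<lambda>_. 0) \<in> A \<and>
     (\<forall>\<phi>\<in>A. \<forall>\<psi>\<in>A. (\<lambda>m. \<phi> m + \<psi> m) \<in> A) \<and>
     (\<forall>c. \<forall>\<phi>\<in>A. (\<lambda>m. c * \<phi> m) \<in> A) \<and> l2closure T V A \<subseteq> A"

definition lin_span_c :: "(('v \<Rightarrow> 'a) \<Rightarrow> complex) set \<Rightarrow> (('v \<Rightarrow> 'a) \<Rightarrow> complex) set" where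
  "lin_span_c S = {\<psi>. \<exists>(n::nat) c \<phi>. (\<forall>i<n. \<phi> i \<in> S) \<and> \<psi> = (\<lambda>m. \<Sum>i<n. c i * \<phi> i m)}"

text \<open>Tensor product of vectors over disjoint V and W.\<close>
definition vtensor :: "('v \<Rightarrow> 'a set) \<Rightarrow> 'v set \<Rightarrow> 'v set \<Rightarrow> (('v \<Rightarrow> 'a) \<Rightarrow> complex)
    \<Rightarrow> (('v \<Rightarrow> 'a) \<Rightarrow> complex) \<Rightarrow> (('v \<Rightarrow> 'a) \<Rightarrow> complex)" where
  "vtensor T V W \<phi> \<eta> = (\<lambda>m. if m \<in> asg T (V \<union> W) then \<phi> (restr V m) * \<eta> (restr W m) else 0)"

text \<open>Identification of a predicate S over V with the predicate S \<otimes> l2[W] over V \<union> W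
  (closed span of the elementary tensors).\<close>
definition lift :: "('v \<Rightarrow> 'a set) \<Rightarrow> 'v set \<Rightarrow> 'v set \<Rightarrow> (('v \<Rightarrow> 'a) \<Rightarrow> complex) set
    \<Rightarrow> (('v \<Rightarrow> 'a) \<Rightarrow> complex) set" where
  "lift T V W S = l2closure T (V \<union> W)
      (lin_span_c {vtensor T V W \<phi> \<eta> | \<phi> \<eta>. \<phi> \<in> S \<and> \<eta> \<in> l2 T W})"

definition ket0 :: "('v \<Rightarrow> 'a) \<Rightarrow> 'v set \<Rightarrow> (('v \<Rightarrow> 'a) \<Rightarrow> complex)" where
  "ket0 z V = (\<lambda>m. if m = restr V z then 1 else 0)"

text \<open>(W =q psi) as a predicate over V: span{psi} \<otimes> l2[V - W].\<close>
definition qeq :: "('v \<Rightarrow> 'a set) \<Rightarrow> 'v set \<Rightarrow> (('v \<Rightarrow> 'a) \<Rightarrow> complex) \<Rightarrow> 'v set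
    \<Rightarrow> (('v \<Rightarrow> 'a) \<Rightarrow> complex) set" where
  "qeq T W \<psi> V = lift T W (V - W) (lin_span_c {\<psi>})"

text \<open>Renaming A{e/x}: image of A (over Y, x \<in> Y, e \<notin> Y) under |i>_x \<mapsto> |i>_e.\<close>
definition rename_pred :: "('v \<Rightarrow> 'a set) \<Rightarrow> 'v set \<Rightarrow> 'v \<Rightarrow> 'v \<Rightarrow> (('v \<Rightarrow> 'a) \<Rightarrow> complex) set
    \<Rightarrow> (('v \<Rightarrow> 'a) \<Rightarrow> complex) set" where
  "rename_pred T Y x e A = {(\<lambda>m. if m \<in> asg T ((Y - {x}) \<union> {e})
        then \<psi> (m(x := m e, e := undefined)) else 0) | \<psi>. \<psi> \<in> A}"

text \<open>Mixed memory over V: (kernel of) a positive trace-class operator on l2[V].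
  Positivity is tested on finitely supported vectors; trace class = summable diagonal.\<close>
definition mixed_memory :: "('v \<Rightarrow> 'a set) \<Rightarrow> 'v set \<Rightarrow> (('v \<Rightarrow> 'a) \<Rightarrow> ('v \<Rightarrow> 'a) \<Rightarrow> complex) \<Rightarrow> bool" where
  "mixed_memory T V \<rho> \<longleftrightarrow>
     (\<forall>s t. s \<notin> asg T V \<or> t \<notin> asg T V \<longrightarrow> \<rho> s t = 0) \<and>
     (\<forall>F c. finite F \<and> F \<subseteq> asg T V \<longrightarrow>
        Im (\<Sum>s\<in>F. \<Sum>t\<in>F. cnj (c s) * \<rho> s t * c t) = 0 \<and>
        0 \<le> Re (\<Sum>s\<in>F. \<Sum>t\<in>F. cnj (c s) * \<rho> s t * c t)) \<and>
     (\<lambda>s. \<rho> s s) summable_on asg T V"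

definition ktensor :: "('v \<Rightarrow> 'a set) \<Rightarrow> 'v set \<Rightarrow> 'v set
    \<Rightarrow> (('v \<Rightarrow> 'a) \<Rightarrow> ('v \<Rightarrow> 'a) \<Rightarrow> complex) \<Rightarrow> (('v \<Rightarrow> 'a) \<Rightarrow> ('v \<Rightarrow> 'a) \<Rightarrow> complex)
    \<Rightarrow> (('v \<Rightarrow> 'a) \<Rightarrow> ('v \<Rightarrow> 'a) \<Rightarrow> complex)" where
  "ktensor T V W \<rho> \<sigma> = (\<lambda>s t. if s \<in> asg T (V \<union> W) \<and> t \<in> asg T (V \<union> W)
      then \<rho> (restr V s) (restr V t) * \<sigma> (restr W s) (restr W t) else 0)"

definition ptrace :: "('v \<Rightarrow> 'a set) \<Rightarrow> 'v set \<Rightarrow> 'v set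
    \<Rightarrow> (('v \<Rightarrow> 'a) \<Rightarrow> ('v \<Rightarrow> 'a) \<Rightarrow> complex) \<Rightarrow> (('v \<Rightarrow> 'a) \<Rightarrow> ('v \<Rightarrow> 'a) \<Rightarrow> complex)" where
  "ptrace T Y W \<rho> = (\<lambda>s t. if s \<in> asg T (Y - W) \<and> t \<in> asg T (Y - W)
      then infsum (\<lambda>u. \<rho> (merge W u s) (merge W u t)) (asg T W) else 0)"

definition proj0 :: "('v \<Rightarrow> 'a) \<Rightarrow> 'v set \<Rightarrow> (('v \<Rightarrow> 'a) \<Rightarrow> ('v \<Rightarrow> 'a) \<Rightarrow> complex)" where
  "proj0 z V = (\<lambda>s t. if s = restr V z \<and> t = restr V z then 1 else 0)"

definition kapply :: "('v \<Rightarrow> 'a set) \<Rightarrow> 'v set \<Rightarrow> (('v \<Rightarrow> 'a) \<Rightarrow> ('v \<Rightarrow> 'a) \<Rightarrow> complex)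
    \<Rightarrow> (('v \<Rightarrow> 'a) \<Rightarrow> complex) \<Rightarrow> (('v \<Rightarrow> 'a) \<Rightarrow> complex)" where
  "kapply T V \<rho> \<psi> = (\<lambda>s. infsum (\<lambda>t. \<rho> s t * \<psi> t) (asg T V))"

definition supp :: "('v \<Rightarrow> 'a set) \<Rightarrow> 'v set \<Rightarrow> (('v \<Rightarrow> 'a) \<Rightarrow> ('v \<Rightarrow> 'a) \<Rightarrow> complex)
    \<Rightarrow> (('v \<Rightarrow> 'a) \<Rightarrow> complex) set" where
  "supp T V \<rho> = l2closure T V {kapply T V \<rho> \<psi> | \<psi>. \<psi> \<in> l2 T V}"

definition separable :: "('v \<Rightarrow> 'a set) \<Rightarrow> 'v set \<Rightarrow> 'v set
    \<Rightarrow> (('v \<Rightarrow> 'a) \<Rightarrow> ('v \<Rightarrow> 'a) \<Rightarrow> complex) \<Rightarrow> bool" where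
  "separable T V W \<rho> \<longleftrightarrow> (\<exists>\<rho>1 \<rho>2. (\<forall>i::nat. mixed_memory T V (\<rho>1 i) \<and> mixed_memory T W (\<rho>2 i)) \<and>
      (\<forall>s t. (\<lambda>i. ktensor T V W (\<rho>1 i) (\<rho>2 i) s t) sums \<rho> s t))"

definition satisfies :: "('v \<Rightarrow> 'a set) \<Rightarrow> 'v set \<Rightarrow> 'v set \<Rightarrow> 'v set
    \<Rightarrow> (('v \<Rightarrow> 'a) \<Rightarrow> ('v \<Rightarrow> 'a) \<Rightarrow> complex) \<Rightarrow> (('v \<Rightarrow> 'a) \<Rightarrow> complex) set \<Rightarrow> bool" where
  "satisfies T X E U \<rho> A \<longleftrightarrow> (\<exists>\<rho>o. mixed_memory T (X \<union> E \<union> U) \<rho>o \<and>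
      separable T (X \<union> E) U \<rho>o \<and> supp T (X \<union> E \<union> U) \<rho>o \<subseteq> A \<and>
      ptrace T (X \<union> E \<union> U) (E \<union> U) \<rho>o = \<rho>)"

definition init_sem :: "('v \<Rightarrow> 'a set) \<Rightarrow> ('v \<Rightarrow> 'a) \<Rightarrow> 'v set \<Rightarrow> 'v
    \<Rightarrow> (('v \<Rightarrow> 'a) \<Rightarrow> ('v \<Rightarrow> 'a) \<Rightarrow> complex) \<Rightarrow> (('v \<Rightarrow> 'a) \<Rightarrow> ('v \<Rightarrow> 'a) \<Rightarrow> complex)" where
  "init_sem T z Xall x \<rho> = ktensor T (Xall - {x}) {x} (ptrace T Xall {x} \<rho>) (proj0 z {x})"

definition hoare :: "('v \<Rightarrow> 'a set) \<Rightarrow> 'v set \<Rightarrow> 'v set \<Rightarrow> 'v set \<Rightarrow> (('v \<Rightarrow> 'a) \<Rightarrow> complex) set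
    \<Rightarrow> ((('v \<Rightarrow> 'a) \<Rightarrow> ('v \<Rightarrow> 'a) \<Rightarrow> complex) \<Rightarrow> (('v \<Rightarrow> 'a) \<Rightarrow> ('v \<Rightarrow> 'a) \<Rightarrow> complex))
    \<Rightarrow> 'v set \<Rightarrow> 'v set \<Rightarrow> (('v \<Rightarrow> 'a) \<Rightarrow> complex) set \<Rightarrow> bool" where
  "hoare T Xall E U A c E' U' B \<longleftrightarrow>
     (\<forall>\<rho>. mixed_memory T Xall \<rho> \<longrightarrow> satisfies T Xall E U \<rho> A \<longrightarrow> satisfies T Xall E' U' (c \<rho>) B)"

end

theory Submission
  imports Defs
begin

lemma cmp_summable:
  fixes f :: "'x \<Rightarrow> 'b::banach"
  assumes "g summable_on A" "\<And>y. y \<in> A \<Longrightarrow> norm (f y) \<le> g y"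
  shows "f summable_on A"
proof -
  have "(\<lambda>y. norm (f y)) summable_on A"
    by (rule summable_on_comparison_test[OF assms(1)]) (auto simp: assms(2))
  then show ?thesis using abs_summable_summable by blast
qed

lemma mm_zero: assumes "mixed_memory T V \<rho>" "s \<notin> asg T V \<or> t \<notin> asg T V" shows "\<rho> s t = 0"
proof -
  have "\<forall>s t. s \<notin> asg T V \<or> t \<notin> asg T V \<longrightarrow> \<rho> s t = 0"
    using assms(1) unfolding mixed_memory_def by (rule conjunct1)
  then show ?thesis using assms(2) by blast
qed
lemma mm_pos: assumes "mixed_memory T V \<rho>" "finite F" "F \<subseteq> asg T V" shows
       "Im (\<Sum>s\<in>F. \<Sum>t\<in>F. cnj (c s) * \<rho> s t * c t) = 0 \<and>
        0 \<le> Re (\<Sum>s\<in>F. \<Sum>t\<in>F. cnj (c s) * \<rho> s t * c t)"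
proof -
  have "\<forall>F c. finite F \<and> F \<subseteq> asg T V \<longrightarrow>
        Im (\<Sum>s\<in>F. \<Sum>t\<in>F. cnj (c s) * \<rho> s t * c t) = 0 \<and>
        0 \<le> Re (\<Sum>s\<in>F. \<Sum>t\<in>F. cnj (c s) * \<rho> s t * c t)"
    using assms(1) unfolding mixed_memory_def by (rule conjunct1[OF conjunct2])
  then show ?thesis using assms(2,3) by blast
qed
lemma mm_sum: "mixed_memory T V \<rho> \<Longrightarrow> (\<lambda>s. \<rho> s s) summable_on asg T V"
  unfolding mixed_memory_def by (rule conjunct2[OF conjunct2])
lemma mm_intro: "(\<And>s t. s \<notin> asg T V \<or> t \<notin> asg T V \<Longrightarrow> \<rho> s t = 0) \<Longrightarrow>
  (\<And>F c. finite F \<Longrightarrow> F \<subseteq> asg T V \<Longrightarrow>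
        Im (\<Sum>s\<in>F. \<Sum>t\<in>F. cnj (c s) * \<rho> s t * c t) = 0 \<and>
        0 \<le> Re (\<Sum>s\<in>F. \<Sum>t\<in>F. cnj (c s) * \<rho> s t * c t)) \<Longrightarrow>
  (\<lambda>s. \<rho> s s) summable_on asg T V \<Longrightarrow> mixed_memory T V \<rho>"
  unfolding mixed_memory_def by (intro conjI allI impI) auto


lemma asgI: "(\<And>v. v \<in> V \<Longrightarrow> m v \<in> T v) \<Longrightarrow> (\<And>v. v \<notin> V \<Longrightarrow> m v = undefined) \<Longrightarrow> m \<in> asg T V"
  unfolding asg_def by blast
lemma asgD1: "m \<in> asg T V \<Longrightarrow> v \<in> V \<Longrightarrow> m v \<in> T v"
  unfolding asg_def by blast
lemma asgD2: "m \<in> asg T V \<Longrightarrow> v \<notin> V \<Longrightarrow> m v = undefined"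
  unfolding asg_def by blast

locale ren =
  fixes T :: "'v \<Rightarrow> 'a set" and z :: "'v \<Rightarrow> 'a" and x e :: 'v and V :: "'v set"
  assumes xV: "x \<in> V" and eV: "e \<notin> V" and Te: "T e = T x" and zx: "z x \<in> T x"
begin

definition R :: "('v \<Rightarrow> 'a) \<Rightarrow> ('v \<Rightarrow> 'a)" where "R s = s(x := s e, e := undefined)"
definition Ri :: "('v \<Rightarrow> 'a) \<Rightarrow> ('v \<Rightarrow> 'a)" where "Ri m = m(e := m x, x := z x)"
definition S0 where "S0 = {s \<in> asg T (insert e V). s x = z x}"

lemma x_ne_e: "x \<noteq> e" using xV eV by blast

lemma R_asg: assumes "s \<in> S0" shows "R s \<in> asg T V"
proof (rule asgI)
  have s: "s \<in> asg T (insert e V)" using assms unfolding S0_def by blast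
  fix v
  show "v \<in> V \<Longrightarrow> R s v \<in> T v"
    using asgD1[OF s, of v] asgD1[OF s, of e] Te x_ne_e eV unfolding R_def by (cases "v = x") auto
  show "v \<notin> V \<Longrightarrow> R s v = undefined"
    using asgD2[OF s, of v] xV unfolding R_def by (cases "v = e") auto
qed

lemma Ri_S0: assumes m: "m \<in> asg T V" shows "Ri m \<in> S0"
proof -
  have "Ri m \<in> asg T (insert e V)"
  proof (rule asgI)
    fix v
    show "v \<in> insert e V \<Longrightarrow> Ri m v \<in> T v"
      using asgD1[OF m, of v] asgD1[OF m, of x] Te x_ne_e xV zx unfolding Ri_def by (cases "v = x"; cases "v = e") auto
    show "v \<notin> insert e V \<Longrightarrow> Ri m v = undefined"
      using asgD2[OF m, of v] xV unfolding Ri_def by auto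
  qed
  then show ?thesis unfolding S0_def Ri_def by simp
qed

lemma Ri_R: assumes "s \<in> S0" shows "Ri (R s) = s"
proof
  fix v
  have s: "s \<in> asg T (insert e V)" "s x = z x" using assms unfolding S0_def by blast+
  show "Ri (R s) v = s v" using s x_ne_e unfolding Ri_def R_def by (cases "v = x"; cases "v = e") auto
qed

lemma R_Ri: assumes "m \<in> asg T V" shows "R (Ri m) = m"
proof
  fix v
  show "R (Ri m) v = m v" using asgD2[OF assms, of e] eV x_ne_e unfolding Ri_def R_def by (cases "v = x"; cases "v = e") auto
qed

lemma bijR: "bij_betw R S0 (asg T V)"
  by (rule bij_betwI[where g=Ri]) (auto simp: R_asg Ri_S0 Ri_R R_Ri)

lemma S0_sub: "S0 \<subseteq> asg T (insert e V)" unfolding S0_def by blast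

definition ext :: "(('v \<Rightarrow> 'a) \<Rightarrow> ('v \<Rightarrow> 'a) \<Rightarrow> complex) \<Rightarrow> (('v \<Rightarrow> 'a) \<Rightarrow> ('v \<Rightarrow> 'a) \<Rightarrow> complex)"
  where "ext \<rho> = (\<lambda>s t. if s \<in> S0 \<and> t \<in> S0 then \<rho> (R s) (R t) else 0)"


lemma ext_mixed:
  assumes mm: "mixed_memory T V \<rho>"
  shows "mixed_memory T (insert e V) (ext \<rho>)"
proof -
  have z: "\<forall>s t. s \<notin> asg T (insert e V) \<or> t \<notin> asg T (insert e V) \<longrightarrow> ext \<rho> s t = 0"
    using S0_sub unfolding ext_def by auto
  have pos: "Im (\<Sum>s\<in>F. \<Sum>t\<in>F. cnj (c s) * ext \<rho> s t * c t) = 0 \<and>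
        0 \<le> Re (\<Sum>s\<in>F. \<Sum>t\<in>F. cnj (c s) * ext \<rho> s t * c t)"
    if F: "finite F" "F \<subseteq> asg T (insert e V)" for F c
  proof -
    define F0 where "F0 = F \<inter> S0"
    have fin0: "finite F0" using F unfolding F0_def by auto
    have "(\<Sum>s\<in>F. \<Sum>t\<in>F. cnj (c s) * ext \<rho> s t * c t)
        = (\<Sum>s\<in>F0. \<Sum>t\<in>F. cnj (c s) * ext \<rho> s t * c t)"
      by (rule sum.mono_neutral_right) (auto simp: F F0_def ext_def)
    also have "\<dots> = (\<Sum>s\<in>F0. \<Sum>t\<in>F0. cnj (c s) * ext \<rho> s t * c t)"
      by (rule sum.cong[OF refl], rule sum.mono_neutral_right) (auto simp: F F0_def ext_def)
    also have "\<dots> = (\<Sum>s\<in>F0. \<Sum>t\<in>F0. cnj (c (Ri (R s))) * \<rho> (R s) (R t) * c (Ri (R t)))"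
      by (rule sum.cong[OF refl], rule sum.cong[OF refl]) (auto simp: F0_def ext_def Ri_R)
    also have "\<dots> = (\<Sum>m\<in>R ` F0. \<Sum>m'\<in>R ` F0. cnj (c (Ri m)) * \<rho> m m' * c (Ri m'))"
    proof -
      have inj: "inj_on R F0" using bijR unfolding F0_def bij_betw_def by (meson inf_le2 inj_on_subset)
      show ?thesis by (simp add: sum.reindex[OF inj])
    qed
    finally have eq: "(\<Sum>s\<in>F. \<Sum>t\<in>F. cnj (c s) * ext \<rho> s t * c t) =
        (\<Sum>m\<in>R ` F0. \<Sum>m'\<in>R ` F0. cnj ((c \<circ> Ri) m) * \<rho> m m' * (c \<circ> Ri) m')" by simp
    have "R ` F0 \<subseteq> asg T V" using R_asg F0_def by auto
    then show ?thesis unfolding eq by (rule mm_pos[OF mm finite_imageI[OF fin0]])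
  qed
  have sm: "(\<lambda>s. ext \<rho> s s) summable_on asg T (insert e V)"
  proof -
    have "(\<lambda>s. \<rho> (R s) (R s)) summable_on S0"
      using summable_on_reindex_bij_betw[OF bijR, of "\<lambda>m. \<rho> m m"] mm_sum[OF mm] by simp
    then show ?thesis
      by (subst summable_on_cong_neutral[where T=S0 and g="\<lambda>s. \<rho> (R s) (R s)"]) (auto simp: ext_def S0_sub[THEN subsetD])
  qed
  show ?thesis by (rule mm_intro) (use z pos sm in simp_all)
qed

end

lemma mm_diag: assumes mm: "mixed_memory T V \<rho>" shows "Im (\<rho> s s) = 0 \<and> 0 \<le> Re (\<rho> s s)"
proof (cases "s \<in> asg T V")
  case False then show ?thesis using mm_zero[OF mm] by simp
next
  case True
  have "Im (\<Sum>a\<in>{s}. \<Sum>b\<in>{s}. cnj ((\<lambda>_. 1) a) * \<rho> a b * (\<lambda>_. 1) b) = 0 \<and>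
        0 \<le> Re (\<Sum>a\<in>{s}. \<Sum>b\<in>{s}. cnj ((\<lambda>_. 1) a) * \<rho> a b * (\<lambda>_. 1) b)"
    by (rule mm_pos[OF mm]) (use True in auto)
  then show ?thesis by simp
qed

lemma mm_herm: assumes mm: "mixed_memory T V \<rho>" shows "\<rho> t s = cnj (\<rho> s t)"
proof (cases "s \<in> asg T V \<and> t \<in> asg T V")
  case False then show ?thesis using mm_zero[OF mm] by auto
next
  case True
  show ?thesis
  proof (cases "s = t")
    case True then show ?thesis using mm_diag[OF mm, of s] by (simp add: complex_eq_iff)
  next
    case st: False
    have F: "finite {s,t}" "{s,t} \<subseteq> asg T V" using True by auto
    have 1: "Im (\<Sum>a\<in>{s,t}. \<Sum>b\<in>{s,t}. cnj ((\<lambda>_. 1) a) * \<rho> a b * (\<lambda>_. 1) b) = 0"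
      using conjunct1[OF mm_pos[OF mm F, of "\<lambda>_. 1"]] .
    have 2: "Im (\<Sum>a\<in>{s,t}. \<Sum>b\<in>{s,t}. cnj ((\<lambda>v. if v = t then \<i> else 1) a) * \<rho> a b * (\<lambda>v. if v = t then \<i> else 1) b) = 0"
      using conjunct1[OF mm_pos[OF mm F, of "\<lambda>v. if v = t then \<i> else 1"]] .
    have d: "Im (\<rho> s s) = 0" "Im (\<rho> t t) = 0" using mm_diag[OF mm] by auto
    from 1 have a: "Im (\<rho> s t) + Im (\<rho> t s) = 0" using st d by simp
    from 2 have b: "Re (\<rho> s t) - Re (\<rho> t s) = 0" using st d by simp
    show ?thesis using a b by (simp add: complex_eq_iff)
  qed
qed

lemma mm_bound_sq: assumes mm: "mixed_memory T V \<rho>"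
  shows "(cmod (\<rho> s t))^2 \<le> Re (\<rho> s s) * Re (\<rho> t t)"
proof (cases "s \<in> asg T V \<and> t \<in> asg T V \<and> s \<noteq> t")
  case nf: False
  have ds: "0 \<le> Re (\<rho> s s)" "0 \<le> Re (\<rho> t t)" using mm_diag[OF mm] by auto
  show ?thesis
  proof (cases "s = t")
    case True
    have "cmod (\<rho> s s) = Re (\<rho> s s)" using mm_diag[OF mm, of s] by (simp add: cmod_eq_Re)
    then show ?thesis using True by (simp add: power2_eq_square)
  next
    case False
    then have "\<rho> s t = 0" using mm_zero[OF mm] nf by blast
    then show ?thesis using ds by simp
  qed
next
  case True
  define a where "a = Re (\<rho> s s)"
  define b where "b = Re (\<rho> t t)"
  define w where "w = \<rho> s t"
  have ss: "\<rho> s s = of_real a" using mm_diag[OF mm, of s] unfolding a_def by (simp add: complex_eq_iff)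
  have tt: "\<rho> t t = of_real b" using mm_diag[OF mm, of t] unfolding b_def by (simp add: complex_eq_iff)
  have ts: "\<rho> t s = cnj w" unfolding w_def by (rule mm_herm[OF mm])
  have a0: "0 \<le> a" "0 \<le> b" using mm_diag[OF mm] a_def b_def by auto
  have F: "finite {s,t}" "{s,t} \<subseteq> asg T V" using True by auto
  have st: "s \<noteq> t" using True by blast
  have key: "0 \<le> a * r^2 * (cmod w)^2 - 2 * r * (cmod w)^2 + b" for r :: real
  proof -
    define c where "c = (\<lambda>v. if v = s then - (of_real r * w) else (1::complex))"
    have "0 \<le> Re (\<Sum>a\<in>{s,t}. \<Sum>b\<in>{s,t}. cnj (c a) * \<rho> a b * c b)"
      using conjunct2[OF mm_pos[OF mm F, of c]] .
    also have "(\<Sum>a\<in>{s,t}. \<Sum>b\<in>{s,t}. cnj (c a) * \<rho> a b * c b) =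
       cnj (c s) * \<rho> s s * c s + cnj (c s) * \<rho> s t * c t + cnj (c t) * \<rho> t s * c s + cnj (c t) * \<rho> t t * c t"
      using st by simp
    also have "\<dots> = of_real (r^2 * a) * (w * cnj w) - of_real r * (w * cnj w) - of_real r * (w * cnj w) + of_real b"
      unfolding c_def ss tt ts w_def[symmetric] using st by (simp add: algebra_simps power2_eq_square)
    also have "\<dots> = of_real (a * r^2 * (cmod w)^2 - 2 * r * (cmod w)^2 + b)"
      unfolding complex_norm_square[symmetric] by (simp add: algebra_simps)
    finally show ?thesis by simp
  qed
  show ?thesis
  proof (cases "w = 0")
    case True then show ?thesis using a0 unfolding w_def a_def b_def by simp
  next
    case False
    then have wpos: "0 < (cmod w)^2" by simp
    show ?thesis
    proof (cases "a = 0")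
      case True
      have "0 \<le> a * ((b+1) / (2 * (cmod w)^2))^2 * (cmod w)^2 - 2 * ((b+1) / (2 * (cmod w)^2)) * (cmod w)^2 + b"
        by (rule key)
      also have "\<dots> = -1" using True wpos by (simp add: field_simps)
      finally show ?thesis by simp
    next
      case False
      then have apos: "0 < a" using a0 by simp
      have "0 \<le> a * (1/a)^2 * (cmod w)^2 - 2 * (1/a) * (cmod w)^2 + b" by (rule key)
      also have "\<dots> = b - (cmod w)^2 / a" using apos by (simp add: field_simps power2_eq_square)
      finally have "(cmod w)^2 / a \<le> b" by simp
      then have "(cmod w)^2 \<le> b * a" using apos by (simp add: divide_le_eq)
      then show ?thesis unfolding w_def a_def b_def by (simp add: mult.commute)
    qed
  qed
qed

lemma mm_bound: assumes mm: "mixed_memory T V \<rho>"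
  shows "cmod (\<rho> s t) \<le> sqrt (Re (\<rho> s s)) * sqrt (Re (\<rho> t t))"
  using mm_bound_sq[OF mm, of s t] mm_diag[OF mm]
  by (metis norm_ge_zero real_sqrt_le_mono real_sqrt_mult real_sqrt_pow2_iff real_sqrt_abs abs_norm_cancel power2_eq_square real_sqrt_mult_self)

lemma mm_bound2: assumes mm: "mixed_memory T V \<rho>"
  shows "cmod (\<rho> s t) \<le> (Re (\<rho> s s) + Re (\<rho> t t)) / 2"
proof -
  have "sqrt (Re (\<rho> s s)) * sqrt (Re (\<rho> t t)) \<le> (Re (\<rho> s s) + Re (\<rho> t t)) / 2"
    using arith_geo_mean_sqrt[of "Re (\<rho> s s)" "Re (\<rho> t t)"] mm_diag[OF mm] by (simp add: real_sqrt_mult)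
  then show ?thesis using mm_bound[OF mm, of s t] by linarith
qed

lemma mm_dsum: assumes mm: "mixed_memory T V \<rho>" shows "(\<lambda>s. Re (\<rho> s s)) summable_on asg T V"
  by (rule summable_on_Re[OF mm_sum[OF mm]])

lemma l2D1: "\<psi> \<in> l2 T V \<Longrightarrow> m \<notin> asg T V \<Longrightarrow> \<psi> m = 0" unfolding l2_def by blast
lemma l2D2: "\<psi> \<in> l2 T V \<Longrightarrow> (\<lambda>m. (cmod (\<psi> m))^2) summable_on asg T V" unfolding l2_def by blast
lemma l2I: "(\<And>m. m \<notin> asg T V \<Longrightarrow> \<psi> m = 0) \<Longrightarrow> (\<lambda>m. (cmod (\<psi> m))^2) summable_on asg T V \<Longrightarrow> \<psi> \<in> l2 T V"
  unfolding l2_def by blast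

lemma kapply_l2:
  assumes mm: "mixed_memory T V \<rho>" and psi: "\<psi> \<in> l2 T V"
  shows "kapply T V \<rho> \<psi> \<in> l2 T V"
proof (rule l2I)
  define d where "d s = Re (\<rho> s s)" for s
  define h where "h t = sqrt (d t) * cmod (\<psi> t)" for t
  have d0: "0 \<le> d s" for s using mm_diag[OF mm] d_def by auto
  have dsum: "d summable_on asg T V" unfolding d_def by (rule mm_dsum[OF mm])
  have hsum: "h summable_on asg T V"
  proof (rule summable_on_comparison_test)
    show "(\<lambda>t. (d t + (cmod (\<psi> t))^2) * (1/2)) summable_on asg T V"
      by (rule summable_on_cmult_left, rule summable_on_add[OF dsum l2D2[OF psi]])
    show "h t \<le> (d t + (cmod (\<psi> t))^2) * (1/2)" for t
      using arith_geo_mean_sqrt[of "d t" "(cmod (\<psi> t))^2"] d0[of t] unfolding h_def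
      by (simp add: real_sqrt_mult)
    show "0 \<le> h t" for t unfolding h_def using d0[of t] by simp
  qed
  define K where "K = infsum h (asg T V)"
  have bnd: "cmod (kapply T V \<rho> \<psi> s) \<le> sqrt (d s) * K" for s
  proof -
    have b1: "norm (\<rho> s t * \<psi> t) \<le> sqrt (d s) * h t" for t
      using mult_right_mono[OF mm_bound[OF mm, of s t] norm_ge_zero[of "\<psi> t"]] unfolding h_def d_def
      by (simp add: norm_mult mult.assoc)
    have s2: "(\<lambda>t. sqrt (d s) * h t) summable_on asg T V" by (rule summable_on_cmult_right[OF hsum])
    have as: "(\<lambda>t. norm (\<rho> s t * \<psi> t)) summable_on asg T V"
      by (rule summable_on_comparison_test[OF s2]) (use b1 in auto)
    have "cmod (kapply T V \<rho> \<psi> s) \<le> infsum (\<lambda>t. norm (\<rho> s t * \<psi> t)) (asg T V)"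
      unfolding kapply_def by (rule norm_infsum_bound) (use as in simp)
    also have "\<dots> \<le> infsum (\<lambda>t. sqrt (d s) * h t) (asg T V)"
      by (rule infsum_mono[OF as s2 b1])
    also have "\<dots> = sqrt (d s) * K" unfolding K_def by (rule infsum_cmult_right') 
    finally show ?thesis .
  qed
  have K0: "0 \<le> K" unfolding K_def by (rule infsum_nonneg) (simp add: h_def d0)
  show "(\<lambda>m. (cmod (kapply T V \<rho> \<psi> m))^2) summable_on asg T V"
  proof (rule summable_on_comparison_test)
    show "(\<lambda>m. d m * K^2) summable_on asg T V" by (rule summable_on_cmult_left[OF dsum])
    show "(cmod (kapply T V \<rho> \<psi> m))^2 \<le> d m * K^2" for m
    proof -
      have "(cmod (kapply T V \<rho> \<psi> m))^2 \<le> (sqrt (d m) * K)^2"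
        by (rule power_mono[OF bnd]) simp
      also have "\<dots> = d m * K^2" using d0[of m] by (simp add: power_mult_distrib)
      finally show ?thesis .
    qed
    show "0 \<le> (cmod (kapply T V \<rho> \<psi> m))^2" for m by simp
  qed
  show "kapply T V \<rho> \<psi> m = 0" if "m \<notin> asg T V" for m
    unfolding kapply_def using mm_zero[OF mm] that by simp
qed

lemma l2closure_const: "\<phi> \<in> S \<Longrightarrow> \<phi> \<in> l2 T V \<Longrightarrow> \<phi> \<in> l2closure T V S"
  unfolding l2closure_def l2norm_def by (rule CollectI, rule conjI, assumption, rule exI[of _ "\<lambda>_. \<phi>"]) simp

lemma l2closure_mono: "S \<subseteq> S' \<Longrightarrow> l2closure T V S \<subseteq> l2closure T V S'"
  unfolding l2closure_def by blast

lemma in_lin_span: "\<phi> \<in> S \<Longrightarrow> \<phi> \<in> lin_span_c S"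
  unfolding lin_span_c_def
  by (rule CollectI, rule exI[of _ 1], rule exI[of _ "\<lambda>_. 1"], rule exI[of _ "\<lambda>_. \<phi>"]) simp

lemma ket0_l2: assumes "z x \<in> T x" shows "ket0 z {x} \<in> l2 T {x}"
proof (rule l2I)
  have r: "restr {x} z \<in> asg T {x}" by (rule asgI) (auto simp: restr_def assms)
  show "ket0 z {x} m = 0" if "m \<notin> asg T {x}" for m using that r unfolding ket0_def by auto
  show "(\<lambda>m. (cmod (ket0 z {x} m))^2) summable_on asg T {x}"
  proof -
    have f: "(\<lambda>m. (cmod (ket0 z {x} m))^2) summable_on {restr {x} z}" by simp
    show ?thesis
      by (rule summable_on_cong_neutral[THEN iffD2, OF _ _ _ f]) (auto simp: ket0_def r)
  qed
qed

lemma restr_asg: "s \<in> asg T Y \<Longrightarrow> restr Z s \<in> asg T Z"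
  if "Z \<subseteq> Y" for Y Z
  using that by (intro asgI) (auto simp: restr_def dest: asgD1)

context ren
begin

definition pull :: "(('v \<Rightarrow> 'a) \<Rightarrow> complex) \<Rightarrow> (('v \<Rightarrow> 'a) \<Rightarrow> complex)"
  where "pull \<psi> = (\<lambda>m. if m \<in> asg T V then \<psi> (Ri m) else 0)"

lemma pull_l2: assumes psi: "\<psi> \<in> l2 T (insert e V)" shows "pull \<psi> \<in> l2 T V"
proof (rule l2I)
  show "pull \<psi> m = 0" if "m \<notin> asg T V" for m using that unfolding pull_def by simp
  have "(\<lambda>s. (cmod (\<psi> s))^2) summable_on S0"
    by (rule summable_on_subset_banach[OF l2D2[OF psi] S0_sub])
  then have "(\<lambda>s. (cmod (pull \<psi> (R s)))^2) summable_on S0"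
    by (rule summable_on_cong[THEN iffD1, rotated]) (simp add: pull_def R_asg Ri_R)
  then show "(\<lambda>m. (cmod (pull \<psi> m))^2) summable_on asg T V"
    using summable_on_reindex_bij_betw[OF bijR, of "\<lambda>m. (cmod (pull \<psi> m))^2"] by simp
qed

lemma kapply_ext: assumes mm: "mixed_memory T V \<rho>"
  shows "kapply T (insert e V) (ext \<rho>) \<psi> = (\<lambda>s. if s \<in> S0 then kapply T V \<rho> (pull \<psi>) (R s) else 0)"
proof
  fix s
  show "kapply T (insert e V) (ext \<rho>) \<psi> s = (if s \<in> S0 then kapply T V \<rho> (pull \<psi>) (R s) else 0)"
  proof (cases "s \<in> S0")
    case False then show ?thesis unfolding kapply_def ext_def by simp
  next
    case True
    have "kapply T (insert e V) (ext \<rho>) \<psi> s = infsum (\<lambda>t. \<rho> (R s) (R t) * \<psi> t) S0"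
      unfolding kapply_def by (rule infsum_cong_neutral) (use True S0_sub in \<open>auto simp: ext_def\<close>)
    also have "\<dots> = infsum (\<lambda>t. \<rho> (R s) (R t) * pull \<psi> (R t)) S0"
      by (rule infsum_cong) (simp add: pull_def R_asg Ri_R)
    also have "\<dots> = infsum (\<lambda>m. \<rho> (R s) m * pull \<psi> m) (asg T V)"
      by (rule infsum_reindex_bij_betw[OF bijR])
    finally show ?thesis using True unfolding kapply_def by simp
  qed
qed

definition W' where "W' = (V - {x}) \<union> {e}"
definition Qi :: "('v \<Rightarrow> 'a) \<Rightarrow> ('v \<Rightarrow> 'a)" where "Qi m = m(e := m x, x := undefined)"

lemma bijQ: "bij_betw R (asg T W') (asg T V)"
proof (rule bij_betwI[where g=Qi])
  show "R \<in> asg T W' \<rightarrow> asg T V"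
  proof
    fix s assume s: "s \<in> asg T W'"
    show "R s \<in> asg T V"
    proof (rule asgI)
      fix v
      show "v \<in> V \<Longrightarrow> R s v \<in> T v"
        using asgD1[OF s, of v] asgD1[OF s, of e] Te x_ne_e eV unfolding R_def W'_def by (cases "v = x") auto
      show "v \<notin> V \<Longrightarrow> R s v = undefined"
        using asgD2[OF s, of v] xV unfolding R_def W'_def by (cases "v = e") auto
    qed
  qed
  show "Qi \<in> asg T V \<rightarrow> asg T W'"
  proof
    fix m assume m: "m \<in> asg T V"
    show "Qi m \<in> asg T W'"
    proof (rule asgI)
      fix v
      show "v \<in> W' \<Longrightarrow> Qi m v \<in> T v"
        using asgD1[OF m, of v] asgD1[OF m, of x] Te x_ne_e xV unfolding Qi_def W'_def by (cases "v = e") auto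
      show "v \<notin> W' \<Longrightarrow> Qi m v = undefined"
        using asgD2[OF m, of v] unfolding Qi_def W'_def by (cases "v = x") auto
    qed
  qed
  show "Qi (R s) = s" if s: "s \<in> asg T W'" for s
  proof
    fix v show "Qi (R s) v = s v"
      using asgD2[OF s, of x] x_ne_e unfolding Qi_def R_def W'_def by (cases "v = x"; cases "v = e") auto
  qed
  show "R (Qi m) = m" if m: "m \<in> asg T V" for m
  proof
    fix v show "R (Qi m) v = m v"
      using asgD2[OF m, of e] eV x_ne_e unfolding Qi_def R_def by (cases "v = x"; cases "v = e") auto
  qed
qed

definition rn :: "(('v \<Rightarrow> 'a) \<Rightarrow> complex) \<Rightarrow> (('v \<Rightarrow> 'a) \<Rightarrow> complex)"
  where "rn \<phi> = (\<lambda>m. if m \<in> asg T ((V - {x}) \<union> {e}) then \<phi> (m(x := m e, e := undefined)) else 0)"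

lemma rn_alt: "rn \<phi> = (\<lambda>m. if m \<in> asg T W' then \<phi> (R m) else 0)"
  unfolding rn_def W'_def R_def by simp

lemma rn_l2: assumes "\<phi> \<in> l2 T V" shows "rn \<phi> \<in> l2 T W'"
proof (rule l2I)
  show "rn \<phi> m = 0" if "m \<notin> asg T W'" for m using that unfolding rn_alt by simp
  have "(\<lambda>s. (cmod (\<phi> (R s)))^2) summable_on asg T W'"
    using summable_on_reindex_bij_betw[OF bijQ, of "\<lambda>m. (cmod (\<phi> m))^2"] l2D2[OF assms] by simp
  then show "(\<lambda>m. (cmod (rn \<phi> m))^2) summable_on asg T W'"
    by (rule summable_on_cong[THEN iffD1, rotated]) (simp add: rn_alt)
qed

lemma W'_x: "W' \<union> {x} = insert e V" "{x} \<union> W' = insert e V"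
  unfolding W'_def using xV by auto


lemma vt_eq: "vtensor T W' {x} (rn \<phi>) (ket0 z {x}) = (\<lambda>s. if s \<in> S0 then \<phi> (R s) else 0)"
  "vtensor T {x} W' (ket0 z {x}) (rn \<phi>) = (\<lambda>s. if s \<in> S0 then \<phi> (R s) else 0)"
proof -
  have *: "(if s \<in> asg T (insert e V) then rn \<phi> (restr W' s) * ket0 z {x} (restr {x} s) else 0)
      = (if s \<in> S0 then \<phi> (R s) else 0)" for s
  proof (cases "s \<in> asg T (insert e V)")
    case True
    have a: "restr W' s \<in> asg T W'" by (rule restr_asg[OF _ True]) (auto simp: W'_def)
    have b: "R (restr W' s) = R s"
      unfolding R_def restr_def W'_def using x_ne_e asgD2[OF True] by (auto simp: fun_eq_iff)
    have c: "(restr {x} s = restr {x} z) \<longleftrightarrow> s x = z x"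
      unfolding restr_def by (auto simp: fun_eq_iff)
    show ?thesis using True a b c unfolding rn_alt ket0_def S0_def by auto
  next
    case False then show ?thesis using S0_sub by auto
  qed
  show "vtensor T W' {x} (rn \<phi>) (ket0 z {x}) = (\<lambda>s. if s \<in> S0 then \<phi> (R s) else 0)"
    unfolding vtensor_def W'_x using * by simp
  show "vtensor T {x} W' (ket0 z {x}) (rn \<phi>) = (\<lambda>s. if s \<in> S0 then \<phi> (R s) else 0)"
    unfolding vtensor_def W'_x by (rule HOL.ext, subst mult.commute, rule *)
qed

lemma supp_ext:
  assumes mm: "mixed_memory T V \<rho>" and sA: "supp T V \<rho> \<subseteq> A"
  shows "supp T (insert e V) (ext \<rho>) \<subseteq> lift T W' {x} (rename_pred T V x e A) \<inter> lift T {x} W' (lin_span_c {ket0 z {x}})"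
proof -
  have k0: "ket0 z {x} \<in> l2 T {x}" by (rule ket0_l2) (rule zx)
  have sub: "kapply T (insert e V) (ext \<rho>) \<psi> \<in> lin_span_c {vtensor T W' {x} \<phi> \<eta> | \<phi> \<eta>. \<phi> \<in> rename_pred T V x e A \<and> \<eta> \<in> l2 T {x}}
      \<and> kapply T (insert e V) (ext \<rho>) \<psi> \<in> lin_span_c {vtensor T {x} W' \<phi> \<eta> | \<phi> \<eta>. \<phi> \<in> lin_span_c {ket0 z {x}} \<and> \<eta> \<in> l2 T W'}"
    if psi: "\<psi> \<in> l2 T (insert e V)" for \<psi>
  proof -
    define \<phi> where "\<phi> = kapply T V \<rho> (pull \<psi>)"
    have pl2: "\<phi> \<in> l2 T V" unfolding \<phi>_def by (rule kapply_l2[OF mm pull_l2[OF psi]])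
    have "\<phi> \<in> supp T V \<rho>" unfolding supp_def
      by (rule l2closure_const[OF _ pl2]) (use pull_l2[OF psi] \<phi>_def in blast)
    then have pA: "\<phi> \<in> A" using sA by blast
    have rA: "rn \<phi> \<in> rename_pred T V x e A" unfolding rename_pred_def rn_def using pA by blast
    have kap: "kapply T (insert e V) (ext \<rho>) \<psi> = (\<lambda>s. if s \<in> S0 then \<phi> (R s) else 0)"
      unfolding kapply_ext[OF mm] \<phi>_def ..
    show ?thesis unfolding kap
      by (rule conjI; rule in_lin_span)
         (use vt_eq rA k0 rn_l2[OF pl2] in_lin_span[of "ket0 z {x}" "{ket0 z {x}}"] in \<open>auto intro!: exI\<close>)
  qed
  have "supp T (insert e V) (ext \<rho>) \<subseteq> lift T W' {x} (rename_pred T V x e A)"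
    unfolding supp_def lift_def W'_x by (rule l2closure_mono) (use sub in blast)
  moreover have "supp T (insert e V) (ext \<rho>) \<subseteq> lift T {x} W' (lin_span_c {ket0 z {x}})"
    unfolding supp_def lift_def W'_x by (rule l2closure_mono) (use sub in blast)
  ultimately show ?thesis by blast
qed

end

lemma mergeI: "u \<in> asg T W \<Longrightarrow> s \<in> asg T X \<Longrightarrow> merge W u s \<in> asg T (W \<union> X)"
  by (rule asgI) (auto simp: merge_def dest: asgD1 asgD2)

locale setting =
  fixes T :: "'v \<Rightarrow> 'a set" and z :: "'v \<Rightarrow> 'a" and x e :: 'v and Xall E U :: "'v set"
  assumes zall: "\<forall>v. z v \<in> T v"
    and dXE: "Xall \<inter> E = {}" and dXU: "Xall \<inter> U = {}" and dEU: "E \<inter> U = {}"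
    and xX: "x \<in> Xall" and eX: "e \<notin> Xall" and eEU: "e \<notin> E \<union> U" and Te: "T e = T x"
begin

lemma zx: "z x \<in> T x" using zall by blast

sublocale rY: ren T z x e "Xall \<union> E \<union> U"
  by unfold_locales (use xX eX eEU Te zx in auto)

sublocale r1: ren T z x e "Xall \<union> E"
  by unfold_locales (use xX eX eEU Te zx in auto)

lemma xG: "x \<notin> E \<union> U" using xX dXE dXU by blast

lemma ptrace_ext:
  assumes mm: "mixed_memory T (Xall \<union> E \<union> U) \<rho>o"
  shows "ptrace T (Xall \<union> insert e E \<union> U) (insert e E \<union> U) (rY.ext \<rho>o)
       = init_sem T z Xall x (ptrace T (Xall \<union> E \<union> U) (E \<union> U) \<rho>o)"
proof (intro HOL.ext)
  fix s t
  define G where "G = E \<union> U"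
  define G' where "G' = insert e E \<union> U"
  define Y where "Y = Xall \<union> E \<union> U"
  define X0 where "X0 = Xall - {x}"
  have eq1: "Xall \<union> insert e E \<union> U - (insert e E \<union> U) = Xall" using dXE dXU eX by auto
  have eq2: "Xall \<union> E \<union> U - (E \<union> U) = Xall" using dXE dXU by auto
  have eq3: "Xall - {x} \<union> {x} = Xall" using xX by auto
  show "ptrace T (Xall \<union> insert e E \<union> U) (insert e E \<union> U) (rY.ext \<rho>o) s t
       = init_sem T z Xall x (ptrace T (Xall \<union> E \<union> U) (E \<union> U) \<rho>o) s t"
  proof (cases "s \<in> asg T Xall \<and> t \<in> asg T Xall")
    case False
    then show ?thesis unfolding ptrace_def init_sem_def ktensor_def eq1 eq3 by auto
  next
    case True
    then have sX: "s \<in> asg T Xall" and tX: "t \<in> asg T Xall" by auto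
    define s0 where "s0 = restr X0 s"
    define t0 where "t0 = restr X0 t"
    have s0X: "s0 \<in> asg T X0" unfolding s0_def X0_def by (rule restr_asg[OF _ sX]) auto
    have t0X: "t0 \<in> asg T X0" unfolding t0_def X0_def by (rule restr_asg[OF _ tX]) auto
    define P where "P = (\<lambda>(w0 :: 'v \<Rightarrow> 'a) (a, b). merge G b (merge {x} a w0))"
    define F where "F = (\<lambda>ab. \<rho>o (P s0 ab) (P t0 ab))"
    have Pasg: "P w0 (a, b) \<in> asg T Y" if "w0 \<in> asg T X0" "a \<in> asg T {x}" "b \<in> asg T G" for w0 a b
    proof -
      have "merge {x} a w0 \<in> asg T ({x} \<union> X0)" by (rule mergeI[OF that(2,1)])
      then have "merge G b (merge {x} a w0) \<in> asg T (G \<union> ({x} \<union> X0))" by (rule mergeI[OF that(3)])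
      moreover have "G \<union> ({x} \<union> X0) = Y" unfolding G_def X0_def Y_def using xX by auto
      ultimately show ?thesis unfolding P_def by simp
    qed
    have Pinj: "inj_on (P w0) (asg T {x} \<times> asg T G)" if "w0 \<in> asg T X0" for w0
    proof (rule inj_onI)
      fix ab ab' assume ab: "ab \<in> asg T {x} \<times> asg T G" and ab': "ab' \<in> asg T {x} \<times> asg T G"
        and eq: "P w0 ab = P w0 ab'"
      obtain a b where [simp]: "ab = (a, b)" by fastforce
      obtain a' b' where [simp]: "ab' = (a', b')" by fastforce
      have a: "a \<in> asg T {x}" "b \<in> asg T G" "a' \<in> asg T {x}" "b' \<in> asg T G" using ab ab' by auto
      have "b = b'"
      proof
        fix v show "b v = b' v"
          using fun_cong[OF eq, of v] asgD2[OF a(2), of v] asgD2[OF a(4), of v] unfolding P_def merge_def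
          by (cases "v \<in> G") auto
      qed
      moreover have "a = a'"
      proof
        fix v show "a v = a' v"
          using fun_cong[OF eq, of v] asgD2[OF a(1), of v] asgD2[OF a(3), of v] xG unfolding P_def merge_def G_def
          by (cases "v = x") auto
      qed
      ultimately show "ab = ab'" by simp
    qed
    have dY: "(\<lambda>m. Re (\<rho>o m m)) summable_on asg T Y" unfolding Y_def by (rule mm_dsum[OF mm])
    have dP: "(\<lambda>ab. Re (\<rho>o (P w0 ab) (P w0 ab))) summable_on (asg T {x} \<times> asg T G)" if w0: "w0 \<in> asg T X0" for w0
    proof -
      have sub: "P w0 ` (asg T {x} \<times> asg T G) \<subseteq> asg T Y" using Pasg[OF w0] by auto
      have "(\<lambda>m. Re (\<rho>o m m)) summable_on P w0 ` (asg T {x} \<times> asg T G)"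
        by (rule summable_on_subset_banach[OF dY sub])
      then show ?thesis using summable_on_reindex[OF Pinj[OF w0], of "\<lambda>m. Re (\<rho>o m m)"] by (simp add: o_def)
    qed
    have Fsum: "F summable_on (asg T {x} \<times> asg T G)"
    proof (rule cmp_summable)
      show "(\<lambda>ab. (Re (\<rho>o (P s0 ab) (P s0 ab)) + Re (\<rho>o (P t0 ab) (P t0 ab))) / 2) summable_on (asg T {x} \<times> asg T G)"
        using summable_on_cmult_left[OF summable_on_add[OF dP[OF s0X] dP[OF t0X]], of "1/2"] by simp
      show "norm (F ab) \<le> (Re (\<rho>o (P s0 ab) (P s0 ab)) + Re (\<rho>o (P t0 ab) (P t0 ab))) / 2" for ab
        unfolding F_def by (rule mm_bound2[OF mm])
    qed
    define hx where "hx u = (\<lambda>v. if v = x then u e else undefined)" for u :: "'v \<Rightarrow> 'a"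
    define h where "h u = (hx u, restr G u)" for u
    define hi where "hi = (\<lambda>(a, b). (\<lambda>v. if v = e then a x else (b :: 'v \<Rightarrow> 'a) v))"
    have eG: "e \<notin> G" using eEU G_def by simp
    have bij: "bij_betw h (asg T G') (asg T {x} \<times> asg T G)"
    proof (rule bij_betwI[where g=hi])
      show "h \<in> asg T G' \<rightarrow> asg T {x} \<times> asg T G"
      proof
        fix u assume u: "u \<in> asg T G'"
        have "hx u \<in> asg T {x}"
          by (rule asgI) (use asgD1[OF u, of e] Te in \<open>auto simp: hx_def G'_def\<close>)
        moreover have "restr G u \<in> asg T G" by (rule restr_asg[OF _ u]) (auto simp: G_def G'_def)
        ultimately show "h u \<in> asg T {x} \<times> asg T G" unfolding h_def by simp
      qed
      show "hi \<in> asg T {x} \<times> asg T G \<rightarrow> asg T G'"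
      proof
        fix ab assume ab: "ab \<in> asg T {x} \<times> asg T G"
        obtain a b where [simp]: "ab = (a, b)" by fastforce
        have a: "a \<in> asg T {x}" "b \<in> asg T G" using ab by auto
        show "hi ab \<in> asg T G'"
          by (rule asgI) (use asgD1[OF a(1), of x] asgD1[OF a(2)] asgD2[OF a(2)] Te in \<open>auto simp: hi_def G'_def G_def\<close>)
      qed
      show "hi (h u) = u" if u: "u \<in> asg T G'" for u
      proof
        fix v show "hi (h u) v = u v"
          using asgD2[OF u, of v] eG unfolding hi_def h_def hx_def restr_def G'_def G_def by auto
      qed
      show "h (hi ab) = ab" if ab: "ab \<in> asg T {x} \<times> asg T G" for ab
      proof -
        obtain a b where [simp]: "ab = (a, b)" by fastforce
        have a: "a \<in> asg T {x}" "b \<in> asg T G" using ab by auto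
        have 1: "hx (hi ab) = a"
        proof
          fix v show "hx (hi ab) v = a v" using asgD2[OF a(1), of v] unfolding hx_def hi_def by auto
        qed
        have 2: "restr G (hi ab) = b"
        proof
          fix v show "restr G (hi ab) v = b v" using asgD2[OF a(2), of v] eG unfolding restr_def hi_def by auto
        qed
        show ?thesis unfolding h_def 1 2 by simp
      qed
    qed
    have Rm: "rY.R (merge G' u w) = P (restr X0 w) (h u)" if "w \<in> asg T Xall" for u w
    proof
      fix v
      show "rY.R (merge G' u w) v = P (restr X0 w) (h u) v"
        using asgD2[OF that, of v] xG eX eEU rY.x_ne_e
        unfolding rY.R_def P_def h_def hx_def merge_def restr_def G'_def G_def X0_def
        by (cases "v = x"; cases "v = e") auto
    qed
    have mS0: "merge G' u w \<in> rY.S0 \<longleftrightarrow> w x = z x" if "u \<in> asg T G'" "w \<in> asg T Xall" for u w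
    proof -
      have "merge G' u w \<in> asg T (G' \<union> Xall)" by (rule mergeI[OF that])
      moreover have "G' \<union> Xall = insert e (Xall \<union> E \<union> U)" unfolding G'_def by auto
      moreover have "merge G' u w x = w x" unfolding merge_def G'_def using xG rY.x_ne_e by auto
      ultimately show ?thesis unfolding rY.S0_def by auto
    qed
    have lhs: "ptrace T (Xall \<union> insert e E \<union> U) (insert e E \<union> U) (rY.ext \<rho>o) s t
        = (if s x = z x \<and> t x = z x then infsum F (asg T {x} \<times> asg T G) else 0)"
    proof -
      have "ptrace T (Xall \<union> insert e E \<union> U) (insert e E \<union> U) (rY.ext \<rho>o) s t
          = infsum (\<lambda>u. rY.ext \<rho>o (merge G' u s) (merge G' u t)) (asg T G')"
        unfolding ptrace_def eq1 G'_def using sX tX by simp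
      also have "\<dots> = infsum (\<lambda>u. if s x = z x \<and> t x = z x then F (h u) else 0) (asg T G')"
        by (rule infsum_cong) (simp add: rY.ext_def mS0 sX tX Rm F_def s0_def t0_def)
      also have "\<dots> = (if s x = z x \<and> t x = z x then infsum F (asg T {x} \<times> asg T G) else 0)"
      proof (cases "s x = z x \<and> t x = z x")
        case True then show ?thesis using infsum_reindex_bij_betw[OF bij, of F] by simp
      next
        case False
        then have "(\<lambda>u. if s x = z x \<and> t x = z x then F (h u) else 0) = (\<lambda>u. 0)" by (intro HOL.ext) auto
        then show ?thesis using False by (simp only: if_False infsum_0_simp)
      qed
      finally show ?thesis .
    qed
    have rhs: "init_sem T z Xall x (ptrace T (Xall \<union> E \<union> U) (E \<union> U) \<rho>o) s t
        = (if s x = z x \<and> t x = z x then infsum (\<lambda>a. infsum (\<lambda>b. F (a, b)) (asg T G)) (asg T {x}) else 0)"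
    proof -
      have pr: "(restr {x} s = restr {x} z \<and> restr {x} t = restr {x} z) \<longleftrightarrow> (s x = z x \<and> t x = z x)"
        unfolding restr_def by (auto simp: fun_eq_iff)
      have inner: "ptrace T (Xall \<union> E \<union> U) (E \<union> U) \<rho>o (merge {x} a s0) (merge {x} a t0) = infsum (\<lambda>b. F (a, b)) (asg T G)"
        if a: "a \<in> asg T {x}" for a
      proof -
        have "merge {x} a s0 \<in> asg T ({x} \<union> X0)" "merge {x} a t0 \<in> asg T ({x} \<union> X0)"
          by (rule mergeI[OF a s0X]) (rule mergeI[OF a t0X])
        moreover have "{x} \<union> X0 = Xall" unfolding X0_def using xX by auto
        ultimately show ?thesis unfolding ptrace_def eq2 F_def P_def G_def by simp
      qed
      have "init_sem T z Xall x (ptrace T (Xall \<union> E \<union> U) (E \<union> U) \<rho>o) s t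
         = ptrace T Xall {x} (ptrace T (Xall \<union> E \<union> U) (E \<union> U) \<rho>o) s0 t0 * (if s x = z x \<and> t x = z x then 1 else 0)"
        unfolding init_sem_def ktensor_def eq3 proj0_def pr s0_def t0_def X0_def using sX tX by simp
      also have "ptrace T Xall {x} (ptrace T (Xall \<union> E \<union> U) (E \<union> U) \<rho>o) s0 t0
          = infsum (\<lambda>a. infsum (\<lambda>b. F (a, b)) (asg T G)) (asg T {x})"
        unfolding ptrace_def[of T Xall "{x}"] using s0X t0X unfolding X0_def
        by (simp add: inner cong: infsum_cong)
      finally show ?thesis by simp
    qed
    have fub: "infsum (\<lambda>a. infsum (\<lambda>b. F (a, b)) (asg T G)) (asg T {x}) = infsum F (asg T {x} \<times> asg T G)"
      by (rule infsum_Sigma_banach[OF Fsum])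
    show ?thesis unfolding lhs rhs fub ..
  qed
qed

end

context setting
begin

lemma kt_ext: "ktensor T (Xall \<union> insert e E) U (r1.ext a) b = rY.ext (ktensor T (Xall \<union> E) U a b)"
proof (intro HOL.ext)
  fix s t
  define V1' where "V1' = Xall \<union> insert e E"
  have Y': "V1' \<union> U = insert e (Xall \<union> E \<union> U)" unfolding V1'_def by auto
  have V1': "V1' = insert e (Xall \<union> E)" unfolding V1'_def by auto
  have S0: "w \<in> rY.S0 \<longleftrightarrow> w \<in> asg T (V1' \<union> U) \<and> w x = z x" for w unfolding rY.S0_def Y' by simp
  have S01: "restr V1' w \<in> r1.S0 \<longleftrightarrow> w x = z x" if "w \<in> asg T (V1' \<union> U)" for w
  proof -
    have "restr V1' w \<in> asg T (insert e (Xall \<union> E))" unfolding V1'[symmetric] by (rule restr_asg[OF _ that]) auto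
    moreover have "restr V1' w x = w x" unfolding restr_def V1'_def using xX by simp
    ultimately show ?thesis unfolding r1.S0_def by simp
  qed
  have R1: "r1.R (restr V1' w) = restr (Xall \<union> E) (rY.R w)" for w
  proof
    fix v show "r1.R (restr V1' w) v = restr (Xall \<union> E) (rY.R w) v"
      using xX eX eEU rY.x_ne_e unfolding r1.R_def rY.R_def restr_def V1'_def by (cases "v = x"; cases "v = e") auto
  qed
  have RU: "restr U w = restr U (rY.R w)" for w
  proof
    fix v show "restr U w v = restr U (rY.R w) v"
      using xG eEU unfolding rY.R_def restr_def by (cases "v = x"; cases "v = e") auto
  qed
  show "ktensor T (Xall \<union> insert e E) U (r1.ext a) b s t = rY.ext (ktensor T (Xall \<union> E) U a b) s t"
  proof (cases "s \<in> asg T (V1' \<union> U) \<and> t \<in> asg T (V1' \<union> U)")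
    case False then show ?thesis unfolding ktensor_def rY.ext_def S0 V1'_def[symmetric] by auto
  next
    case True
    then have sY: "s \<in> asg T (V1' \<union> U)" and tY: "t \<in> asg T (V1' \<union> U)" by auto
    show ?thesis
    proof (cases "s x = z x \<and> t x = z x")
      case False
      then show ?thesis unfolding ktensor_def rY.ext_def r1.ext_def S0 V1'_def[symmetric]
        using S01[OF sY] S01[OF tY] by auto
    next
      case c: True
      have "rY.R s \<in> asg T (Xall \<union> E \<union> U)" "rY.R t \<in> asg T (Xall \<union> E \<union> U)"
        using rY.R_asg S0 sY tY c by auto
      then show ?thesis unfolding ktensor_def rY.ext_def r1.ext_def S0 V1'_def[symmetric]
        using S01[OF sY] S01[OF tY] sY tY c R1 RU by (simp add: Un_assoc)
    qed
  qed
qed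

lemma sep_ext:
  assumes sep: "separable T (Xall \<union> E) U \<rho>o"
  shows "separable T (Xall \<union> insert e E) U (rY.ext \<rho>o)"
proof -
  obtain \<rho>1 \<rho>2 where mm: "\<forall>i::nat. mixed_memory T (Xall \<union> E) (\<rho>1 i) \<and> mixed_memory T U (\<rho>2 i)"
    and sm: "\<forall>s t. (\<lambda>i. ktensor T (Xall \<union> E) U (\<rho>1 i) (\<rho>2 i) s t) sums \<rho>o s t"
    using sep unfolding separable_def by blast
  have V1': "insert e (Xall \<union> E) = Xall \<union> insert e E" by auto
  have mm': "mixed_memory T (Xall \<union> insert e E) (r1.ext (\<rho>1 i)) \<and> mixed_memory T U (\<rho>2 i)" for i
    using r1.ext_mixed[of "\<rho>1 i"] mm unfolding V1' by blast
  have sm': "(\<lambda>i. ktensor T (Xall \<union> insert e E) U (r1.ext (\<rho>1 i)) (\<rho>2 i) s t) sums rY.ext \<rho>o s t" for s t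
  proof (cases "s \<in> rY.S0 \<and> t \<in> rY.S0")
    case True then show ?thesis unfolding kt_ext rY.ext_def using sm by simp
  next
    case False then show ?thesis unfolding kt_ext rY.ext_def by (simp only: if_not_P[OF False] if_False sums_zero)
  qed
  show ?thesis unfolding separable_def
    by (rule exI[of _ "\<lambda>i. r1.ext (\<rho>1 i)"], rule exI[of _ \<rho>2]) (use mm' sm' in blast)
qed

end

context setting
begin

lemma main:
  "hoare T Xall E U A (init_sem T z Xall x) (insert e E) U
     (lift T ((Xall - {x}) \<union> {e} \<union> E \<union> U) {x} (rename_pred T (Xall \<union> E \<union> U) x e A)
      \<inter> qeq T {x} (ket0 z {x}) (Xall \<union> insert e E \<union> U))"
  unfolding hoare_def
proof (intro allI impI)
  fix \<rho>
  assume "mixed_memory T Xall \<rho>" and sat: "satisfies T Xall E U \<rho> A"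
  obtain \<rho>o where mm: "mixed_memory T (Xall \<union> E \<union> U) \<rho>o" and sep: "separable T (Xall \<union> E) U \<rho>o"
    and sA: "supp T (Xall \<union> E \<union> U) \<rho>o \<subseteq> A" and tr: "ptrace T (Xall \<union> E \<union> U) (E \<union> U) \<rho>o = \<rho>"
    using sat unfolding satisfies_def by blast
  have eqY: "Xall \<union> insert e E \<union> U = insert e (Xall \<union> E \<union> U)" by auto
  have eqW1: "(Xall - {x}) \<union> {e} \<union> E \<union> U = rY.W'" unfolding rY.W'_def using xG by auto
  have eqW2: "(Xall \<union> insert e E \<union> U) - {x} = rY.W'" unfolding rY.W'_def using xG rY.x_ne_e by auto
  have 1: "mixed_memory T (Xall \<union> insert e E \<union> U) (rY.ext \<rho>o)" unfolding eqY by (rule rY.ext_mixed[OF mm])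
  have 2: "separable T (Xall \<union> insert e E) U (rY.ext \<rho>o)" by (rule sep_ext[OF sep])
  have 3: "supp T (Xall \<union> insert e E \<union> U) (rY.ext \<rho>o) \<subseteq>
      lift T ((Xall - {x}) \<union> {e} \<union> E \<union> U) {x} (rename_pred T (Xall \<union> E \<union> U) x e A)
      \<inter> qeq T {x} (ket0 z {x}) (Xall \<union> insert e E \<union> U)"
    unfolding qeq_def eqW1 eqW2 unfolding eqY by (rule rY.supp_ext[OF mm sA])
  have 4: "ptrace T (Xall \<union> insert e E \<union> U) (insert e E \<union> U) (rY.ext \<rho>o) = init_sem T z Xall x \<rho>"
    unfolding tr[symmetric] by (rule ptrace_ext[OF mm])
  show "satisfies T Xall (insert e E) U (init_sem T z Xall x \<rho>)
     (lift T ((Xall - {x}) \<union> {e} \<union> E \<union> U) {x} (rename_pred T (Xall \<union> E \<union> U) x e A)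
      \<inter> qeq T {x} (ket0 z {x}) (Xall \<union> insert e E \<union> U))"
    unfolding satisfies_def by (rule exI[of _ "rY.ext \<rho>o"]) (use 1 2 3 4 in blast)
qed

end

theorem lemma16:
  fixes T :: "'v \<Rightarrow> 'a set" and z :: "'v \<Rightarrow> 'a" and kind :: "'v \<Rightarrow> vkind"
    and Xall E U :: "'v set" and x e :: 'v
    and A :: "(('v \<Rightarrow> 'a) \<Rightarrow> complex) set"
  assumes "\<forall>v. z v \<in> T v"
    and "\<forall>v\<in>Xall. kind v = Prog"
    and "\<forall>v\<in>E. kind v = EGhost"
    and "\<forall>v\<in>U. kind v = UGhost"
    and "is_predicate T (Xall \<union> E \<union> U) A"
    and "x \<in> Xall"
    and "kind e = EGhost" and "e \<notin> E \<union> U" and "T e = T x"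
  shows "hoare T Xall E U A (init_sem T z Xall x) (insert e E) U
           (lift T ((Xall - {x}) \<union> {e} \<union> E \<union> U) {x} (rename_pred T (Xall \<union> E \<union> U) x e A)
            \<inter> qeq T {x} (ket0 z {x}) (Xall \<union> insert e E \<union> U))"
proof -
  interpret setting T z x e Xall E U
  proof
    show "\<forall>v. z v \<in> T v" by fact
    show "Xall \<inter> E = {}" using assms(2,3) by fastforce
    show "Xall \<inter> U = {}" using assms(2,4) by fastforce
    show "E \<inter> U = {}" using assms(3,4) by fastforce
    show "x \<in> Xall" by fact
    show "e \<notin> Xall" using assms(2,7) by fastforce
    show "e \<notin> E \<union> U" by fact
    show "T e = T x" by fact
  qed
  show ?thesis by (rule main)
qed

end
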